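(* Let $A$ be a real $N\times N$ matrix with $\rho(|A|)<1$, let $L\ge1$, and let $\mathcal{B}$ be a finite family of subsets of $\{1,\dots,N\}$ such that (1) every orbit $\ell$ of $A$ with $|\ell|<L$ is covered by some $B\in\mathcal{B}$, and (2) $B,B'\in\mathcal{B}$ implies $B\cap B'\in\mathcal{B}$. With $Z(A)=\det(I-A)^{-1}$ and $Z_{\mathcal{B}}=\prod_{B\in\mathcal{B}}\big(\det(I-A_B)^{-1}\big)^{w_B}$ as in the context, $$\frac1N\left|\log\frac{Z_{\mathcal{B}}}{Z(A)}\right|\le\frac{\rho(|A|)^L}{L\,(1-\rho(|A|))}.$$
   Context: $|A|$ is the entrywise absolute value and $\rho$ the spectral radius. Walks of $A$: sequences $(w_0,\dots,w_m)$ of indices with $A_{w_tw_{t+1}}\neq0$; closed if $m\ge1$ and $w_0=w_m$; primitive if not a $k$-fold concatenation ($k\ge2$) of a shorter closed walk. An orbit is an equivalence class of closed primitive walks under cyclic shifts, of length $|\ell|$ equal to that of a representative. An orbit is covered by $B$ if all its vertices lie in $B$. $A_B$ is the principal submatrix of $A$ on $B$ (with $\det(I-A_\emptyset)=1$). Block weights: $w_B=1$ if $B$ is maximal in $\mathcal{B}$, and otherwise $w_B=1-\sum_{B'\in\mathcal{B},\,B'\supsetneq B}w_{B'}$. *)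

theory Defs
  imports "Jordan_Normal_Form.Spectral_Radius" "Jordan_Normal_Form.DL_Submatrix"
begin

text \<open>Indices are 0,...,N-1 (instead of 1,...,N). A walk (w_0,...,w_m) is a list.\<close>

definition walk :: "real mat \<Rightarrow> nat list \<Rightarrow> bool" where
  "walk A w \<longleftrightarrow> w \<noteq> [] \<and> (\<forall>x\<in>set w. x < dim_row A) \<and>
     (\<forall>t. Suc t < length w \<longrightarrow> A $$ (w ! t, w ! Suc t) \<noteq> 0)"

definition closed_walk :: "real mat \<Rightarrow> nat list \<Rightarrow> bool" where
  "closed_walk A w \<longleftrightarrow> walk A w \<and> length w \<ge> 2 \<and> hd w = last w"

definition walk_length :: "nat list \<Rightarrow> nat" where
  "walk_length w = length w - 1"

text \<open>k-fold concatenation of a closed walk c (consecutive copies share the endpoint)\<close>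
definition walk_power :: "nat list \<Rightarrow> nat \<Rightarrow> nat list" where
  "walk_power c k = c @ concat (replicate (k - 1) (tl c))"

definition primitive_closed_walk :: "real mat \<Rightarrow> nat list \<Rightarrow> bool" where
  "primitive_closed_walk A w \<longleftrightarrow> closed_walk A w \<and>
     \<not> (\<exists>c k. k \<ge> 2 \<and> closed_walk A c \<and> walk_length c < walk_length w \<and> w = walk_power c k)"

definition cyclic_shift :: "nat list \<Rightarrow> nat list" where
  "cyclic_shift w = tl w @ [hd (tl w)]"

definition orbit_of :: "nat list \<Rightarrow> nat list set" where
  "orbit_of w = {(cyclic_shift ^^ k) w | k. True}"

definition orbits :: "real mat \<Rightarrow> nat list set set" where
  "orbits A = {orbit_of w | w. primitive_closed_walk A w}"

definition orbit_length :: "nat list set \<Rightarrow> nat" where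
  "orbit_length l = walk_length (SOME w. w \<in> l)"

definition covered_by :: "nat list set \<Rightarrow> nat set \<Rightarrow> bool" where
  "covered_by l B \<longleftrightarrow> (\<forall>w\<in>l. set w \<subseteq> B)"

definition abs_mat :: "real mat \<Rightarrow> real mat" where
  "abs_mat A = map_mat abs A"

definition rho :: "real mat \<Rightarrow> real" where
  "rho A = spectral_radius (map_mat complex_of_real A)"

definition principal_submatrix :: "real mat \<Rightarrow> nat set \<Rightarrow> real mat" where
  "principal_submatrix A B = submatrix A B B"

definition det_I_minus :: "real mat \<Rightarrow> real" where
  "det_I_minus M = det (1\<^sub>m (dim_row M) - M)"

function block_weight :: "nat set set \<Rightarrow> nat set \<Rightarrow> real" where
  "block_weight \<B> B =
     (if finite \<B> \<and> (\<forall>B'\<in>\<B>. finite B')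
      then 1 - (\<Sum>B'\<in>{B'\<in>\<B>. B \<subset> B'}. block_weight \<B> B')
      else 0)"
  by auto
termination
proof (relation "measure (\<lambda>(\<B>, B). card (\<Union>\<B> - B))")
  show "wf (measure (\<lambda>(\<B>, B). card (\<Union>\<B> - B)))" by simp
next
  fix \<B> :: "nat set set" and B B' :: "nat set"
  assume h: "finite \<B> \<and> (\<forall>B'\<in>\<B>. finite B')" and b: "B' \<in> {B' \<in> \<B>. B \<subset> B'}"
  then have fin: "finite (\<Union>\<B>)" by auto
  from b have "B' \<in> \<B>" "B \<subset> B'" by auto
  then have "\<Union>\<B> - B' \<subset> \<Union>\<B> - B" by blast
  then have "card (\<Union>\<B> - B') < card (\<Union>\<B> - B)"
    using fin by (meson finite_Diff psubset_card_mono)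
  then show "((\<B>, B'), \<B>, B) \<in> measure (\<lambda>(\<B>, B). card (\<Union>\<B> - B))" by simp
qed

definition Z_full :: "real mat \<Rightarrow> real" where
  "Z_full A = inverse (det_I_minus A)"

definition Z_blocks :: "real mat \<Rightarrow> nat set set \<Rightarrow> real" where
  "Z_blocks A \<B> = (\<Prod>B\<in>\<B>. inverse (det_I_minus (principal_submatrix A B)) powr block_weight \<B> B)"

end

theory Submission
  imports Defs "HOL-Analysis.Complex_Transcendental"
begin


definition tr :: "'a::comm_ring_1 mat \<Rightarrow> 'a" where
  "tr M = (\<Sum>i<dim_row M. M $$ (i,i))"

lemma tr_mult_comm:
  assumes "A \<in> carrier_mat n m" "B \<in> carrier_mat m n"
  shows "tr (A * B) = tr (B * A)"
proof -
  have "tr (A * B) = (\<Sum>i<n. \<Sum>k<m. A $$ (i,k) * B $$ (k,i))"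
    using assms unfolding tr_def
    by (auto simp: scalar_prod_def lessThan_atLeast0 intro!: sum.cong)
  also have "\<dots> = (\<Sum>k<m. \<Sum>i<n. B $$ (k,i) * A $$ (i,k))"
    by (subst sum.swap) (simp add: mult.commute)
  also have "\<dots> = tr (B * A)"
    using assms unfolding tr_def
    by (auto simp: scalar_prod_def lessThan_atLeast0 intro!: sum.cong)
  finally show ?thesis .
qed

lemma ut_mult:
  assumes A: "A \<in> carrier_mat n n" and B: "B \<in> carrier_mat n n"
    and uA: "upper_triangular A" and uB: "upper_triangular B"
  shows "upper_triangular (A * B) \<and> (\<forall>i<n. (A * B) $$ (i,i) = A $$ (i,i) * B $$ (i,i))"
proof -
  have e: "(A * B) $$ (i,j) = (\<Sum>k<n. A $$ (i,k) * B $$ (k,j))" if "i < n" "j < n" for i j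
    using A B that by (auto simp: scalar_prod_def lessThan_atLeast0)
  have z: "A $$ (i,k) = 0" if "k < i" "i < n" for i k using uA A that unfolding upper_triangular_def by auto
  have zB: "B $$ (k,j) = 0" if "j < k" "k < n" for k j using uB B that unfolding upper_triangular_def by auto
  have "upper_triangular (A * B)"
    unfolding upper_triangular_def
  proof (intro allI impI)
    fix i j assume i: "i < dim_row (A * B)" and j: "j < i"
    have "(\<Sum>k<n. A $$ (i,k) * B $$ (k,j)) = 0"
    proof (rule sum.neutral, intro ballI)
      fix k assume k: "k \<in> {..<n}"
      have iN: "i < n" using i A by simp
      show "A $$ (i,k) * B $$ (k,j) = 0"
      proof (cases "k < i")
        case True thus ?thesis using z[OF True iN] by simp
      next
        case False hence "j < k" using j by simp
        thus ?thesis using zB[of j k] k by simp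
      qed
    qed
    thus "(A * B) $$ (i, j) = 0" using e i j A by auto
  qed
  moreover have "(A * B) $$ (i,i) = A $$ (i,i) * B $$ (i,i)" if i: "i < n" for i
  proof -
    have "(\<Sum>k<n. A $$ (i,k) * B $$ (k,i)) = (\<Sum>k<n. if k = i then A $$ (i,i) * B $$ (i,i) else 0)"
      by (rule sum.cong, simp) (use z zB i in \<open>auto simp: neq_iff\<close>)
    also have "\<dots> = A $$ (i,i) * B $$ (i,i)" using i by simp
    finally show ?thesis using e i by simp
  qed
  ultimately show ?thesis by auto
qed

lemma ut_pow:
  assumes B: "(B::'a::comm_ring_1 mat) \<in> carrier_mat n n" and uB: "upper_triangular B"
  shows "upper_triangular (B ^\<^sub>m m) \<and> (\<forall>i<n. (B ^\<^sub>m m) $$ (i,i) = B $$ (i,i) ^ m)"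
proof (induction m)
  case 0
  then show ?case using B by (auto simp: upper_triangular_def)
next
  case (Suc m)
  have c: "B ^\<^sub>m m \<in> carrier_mat n n" using B by auto
  from ut_mult[OF c B _ uB] Suc show ?case by (simp add: mult.commute)
qed

lemma eig_decomp:
  fixes M :: "complex mat"
  assumes M: "M \<in> carrier_mat n n"
  shows "\<exists>es. length es = n \<and> set es \<subseteq> spectrum M \<and>
     (\<forall>m. tr (M ^\<^sub>m m) = (\<Sum>i<n. (es!i)^m)) \<and> det (1\<^sub>m n - M) = (\<Prod>i<n. 1 - es!i)"
proof -
  obtain es where cp: "char_poly M = (\<Prod>a\<leftarrow>es. [:- a, 1:])" and len: "length es = n"
    using char_poly_factorized[OF M] by auto
  obtain B P Q where sd: "schur_decomposition M es = (B,P,Q)" by (metis prod_cases3)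
  from schur_decomposition[OF M cp sd] have
    sw: "similar_mat_wit M B P Q" and uB: "upper_triangular B" and dB: "diag_mat B = es" by auto
  from sw M have Bc: "B \<in> carrier_mat n n" and Pc: "P \<in> carrier_mat n n" and Qc: "Q \<in> carrier_mat n n"
    and QP: "Q * P = 1\<^sub>m n"
    unfolding similar_mat_wit_def Let_def by auto
  have esi: "es ! i = B $$ (i,i)" if "i < n" for i
    using dB Bc that by (auto simp: diag_mat_def)
  have "set es \<subseteq> spectrum M"
  proof
    fix e assume "e \<in> set es"
    hence "poly (char_poly M) e = 0" unfolding cp by (induction es) auto
    thus "e \<in> spectrum M" unfolding spectrum_def using eigenvalue_root_char_poly[OF M] by auto
  qed
  moreover have "tr (M ^\<^sub>m m) = (\<Sum>i<n. (es!i)^m)" for m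
  proof -
    have Bm: "B ^\<^sub>m m \<in> carrier_mat n n" using Bc by auto
    have "M ^\<^sub>m m = P * B ^\<^sub>m m * Q" by (rule similar_mat_wit_pow_id[OF sw])
    have PB: "P * B ^\<^sub>m m \<in> carrier_mat n n" using Pc Bm by simp
    have "tr (M ^\<^sub>m m) = tr (Q * (P * B ^\<^sub>m m))"
      unfolding \<open>M ^\<^sub>m m = P * B ^\<^sub>m m * Q\<close> by (rule tr_mult_comm[OF PB Qc])
    also have "Q * (P * B ^\<^sub>m m) = (Q * P) * B ^\<^sub>m m"
      by (rule assoc_mult_mat[symmetric, OF Qc Pc Bm])
    also have "\<dots> = B ^\<^sub>m m" unfolding QP by (rule left_mult_one_mat[OF Bm])
    also have "tr (B ^\<^sub>m m) = (\<Sum>i<n. (es!i)^m)"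
      unfolding tr_def using ut_pow[OF Bc uB, of m] Bc esi by auto
    finally show ?thesis .
  qed
  moreover have "det (1\<^sub>m n - M) = (\<Prod>i<n. 1 - es!i)"
  proof -
    have "det (1\<^sub>m n - M) = poly (char_poly M) 1"
      unfolding char_poly_matrix[OF M]
      by (rule arg_cong[of _ _ det]) (use M in \<open>auto simp: char_matrix_def\<close>)
    also have "\<dots> = (\<Prod>a\<leftarrow>es. 1 - a)" unfolding cp by (induction es) (auto simp: algebra_simps)
    also have "\<dots> = (\<Prod>i<n. 1 - es!i)" using len
      by (subst prod.list_conv_set_nth) (simp add: atLeast0LessThan)
    finally show ?thesis .
  qed
  ultimately show ?thesis using len by blast
qed



lemma tr_of_real: "M \<in> carrier_mat n n \<Longrightarrow> tr (map_mat complex_of_real M) = complex_of_real (tr M)"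
  unfolding tr_def by (auto simp: of_real_sum intro!: sum.cong)

lemma log_det:
  fixes M :: "real mat"
  assumes M: "M \<in> carrier_mat n n"
    and sp: "\<forall>e\<in>spectrum (map_mat complex_of_real M). norm e < 1"
  shows "det (1\<^sub>m n - M) > 0 \<and> (\<lambda>m. tr (M ^\<^sub>m m) / real m) sums (- ln (det (1\<^sub>m n - M)))"
proof -
  define Mc where "Mc = map_mat complex_of_real M"
  have Mc: "Mc \<in> carrier_mat n n" using M unfolding Mc_def by auto
  obtain es where len: "length es = n" and ses: "set es \<subseteq> spectrum Mc"
    and trs: "\<And>m. tr (Mc ^\<^sub>m m) = (\<Sum>i<n. (es!i)^m)"
    and dt: "det (1\<^sub>m n - Mc) = (\<Prod>i<n. 1 - es!i)"
    using eig_decomp[OF Mc] by blast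
  have nrm: "norm (es!i) < 1" if "i < n" for i
    using sp ses len that unfolding Mc_def by (meson nth_mem subsetD)
  have h1: "tr (Mc ^\<^sub>m m) = complex_of_real (tr (M ^\<^sub>m m))" for m
    unfolding Mc_def of_real_hom.mat_hom_pow[OF M, symmetric] by (rule tr_of_real) (use M in auto)
  have h2: "det (1\<^sub>m n - Mc) = complex_of_real (det (1\<^sub>m n - M))"
  proof -
    have "1\<^sub>m n - Mc = map_mat complex_of_real (1\<^sub>m n - M)"
      using M unfolding Mc_def by (auto intro!: eq_matI)
    thus ?thesis by (simp add: of_real_hom.hom_det)
  qed
  define S where "S = (\<Sum>i<n. - ln (1 - es!i))"
  have "(\<lambda>k. (es!i)^k / of_nat k) sums (- ln (1 - es!i))" if "i < n" for i
    using sums_minus[OF Ln_series[of "-(es!i)"]] nrm[OF that] by (simp add: power_minus')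
  hence "(\<lambda>k. \<Sum>i<n. (es!i)^k / of_nat k) sums S"
    unfolding S_def by (intro sums_sum) auto
  moreover have "(\<Sum>i<n. (es!i)^k / of_nat k) = complex_of_real (tr (M ^\<^sub>m k) / real k)" for k
    using h1[of k] trs[of k] by (simp add: sum_divide_distrib[symmetric])
  ultimately have sS: "(\<lambda>k. complex_of_real (tr (M ^\<^sub>m k) / real k)) sums S" by simp
  from sS[unfolded sums_complex_iff] have
    sre: "(\<lambda>k. tr (M ^\<^sub>m k) / real k) sums Re S" and sim: "(\<lambda>k. 0) sums Im S" by auto
  have "Im S = 0" using sim sums_unique sums_zero by metis
  hence Sr: "S = complex_of_real (Re S)" by (simp add: complex_eq_iff)
  have "det (1\<^sub>m n - Mc) = (\<Prod>i<n. exp (ln (1 - es!i)))"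
  proof -
    have "1 - es!i \<noteq> 0" if "i < n" for i using nrm[OF that] by auto
    thus ?thesis unfolding dt by (intro prod.cong) auto
  qed
  also have "\<dots> = exp (- S)" unfolding S_def by (simp add: exp_sum sum_negf)
  also have "\<dots> = complex_of_real (exp (- Re S))" by (subst Sr) (metis exp_of_real of_real_minus)
  finally have "det (1\<^sub>m n - M) = exp (- Re S)" unfolding h2 of_real_eq_iff .
  thus ?thesis using sre by simp
qed



lemma pow_mat_Suc_left:
  assumes "R \<in> carrier_mat n n"
  shows "R ^\<^sub>m Suc k = R * R ^\<^sub>m k"
proof (induction k)
  case 0 thus ?case using assms by simp
next
  case (Suc k)
  have Rk: "R ^\<^sub>m k \<in> carrier_mat n n" using assms by simp
  have "R ^\<^sub>m Suc (Suc k) = (R * R ^\<^sub>m k) * R" using Suc by simp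
  also have "\<dots> = R * (R ^\<^sub>m k * R)" using assoc_mult_mat[OF assms Rk assms] .
  finally show ?case by simp
qed

lemma spectrum_smult_sub:
  fixes P :: "complex mat"
  assumes P: "P \<in> carrier_mat n n" and s: "s \<noteq> 0"
    and e: "e \<in> spectrum ((1/s) \<cdot>\<^sub>m P)"
  shows "s * e \<in> spectrum P"
proof -
  from e obtain v where v: "v \<in> carrier_vec n" "v \<noteq> 0\<^sub>v n" "((1/s) \<cdot>\<^sub>m P) *\<^sub>v v = e \<cdot>\<^sub>v v"
    unfolding spectrum_def eigenvalue_def eigenvector_def using P by auto
  have "P *\<^sub>v v = (s * e) \<cdot>\<^sub>v v"
  proof (rule eq_vecI)
    fix i assume i: "i < dim_vec ((s * e) \<cdot>\<^sub>v v)"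
    have "(((1/s) \<cdot>\<^sub>m P) *\<^sub>v v) $ i = (e \<cdot>\<^sub>v v) $ i" using v(3) by simp
    moreover have "(((1/s) \<cdot>\<^sub>m P) *\<^sub>v v) $ i = (1/s) * (P *\<^sub>v v) $ i"
      using i P v(1) by (simp add: scalar_prod_def sum_distrib_left mult.assoc)
    ultimately have "(1/s) * (P *\<^sub>v v) $ i = e * v $ i"
      using i P v by simp
    thus "(P *\<^sub>v v) $ i = ((s * e) \<cdot>\<^sub>v v) $ i" using i s by (simp add: field_simps)
  qed (use P v in auto)
  thus ?thesis unfolding spectrum_def eigenvalue_def eigenvector_def using P v by auto
qed

lemma mat_vec_nonneg_bound:
  fixes P :: "real mat"
  assumes P: "P \<in> carrier_mat N N" and Pnn: "\<forall>i<N. \<forall>j<N. P $$ (i,j) \<ge> 0"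
    and xnn: "\<forall>i<N. x i \<ge> 0" and ipos: "i0 < N" "x i0 > 0" and mu: "mu \<ge> 0"
    and ineq: "\<forall>i<N. mu * x i \<le> (\<Sum>j<N. P $$ (i,j) * x j)"
  shows "mu \<le> rho P"
proof (rule ccontr)
  assume "\<not> mu \<le> rho P"
  hence lt: "rho P < mu" by simp
  define Pc where "Pc = map_mat complex_of_real P"
  have Pc: "Pc \<in> carrier_mat N N" using P unfolding Pc_def by auto
  have N: "N > 0" using ipos by simp
  have r0: "rho P \<ge> 0" using spectral_radius_mem_max(1)[OF Pc N] unfolding rho_def Pc_def by auto
  define s where "s = (rho P + mu) / 2"
  have s: "rho P < s" "s < mu" "s > 0" using lt r0 unfolding s_def by auto
  define R where "R = (1/s) \<cdot>\<^sub>m P"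
  have R: "R \<in> carrier_mat N N" using P unfolding R_def by auto
  have Rnn: "\<forall>i<N. \<forall>j<N. R $$ (i,j) \<ge> 0" using Pnn P s unfolding R_def by auto
  define Q where "Q = map_mat complex_of_real R"
  have Q: "Q \<in> carrier_mat N N" using R unfolding Q_def by auto
  have QPc: "Q = (1 / complex_of_real s) \<cdot>\<^sub>m Pc"
    unfolding Q_def R_def Pc_def using P by (auto intro!: eq_matI)
  have "spectral_radius Q < 1"
  proof -
    have fin: "finite (norm ` spectrum Q)" using card_finite_spectrum(1)[OF Q] by simp
    have ne: "norm ` spectrum Q \<noteq> {}" using spectrum_non_empty[OF Q N] by simp
    have "\<forall>a\<in>norm ` spectrum Q. a < 1"
    proof
      fix a assume "a \<in> norm ` spectrum Q"
      then obtain e where e: "e \<in> spectrum Q" and a: "a = norm e" by auto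
      have "complex_of_real s * e \<in> spectrum Pc"
        by (rule spectrum_smult_sub[OF Pc]) (use s e QPc in auto)
      hence "norm (complex_of_real s * e) \<le> rho P"
        using spectral_radius_mem_max(2)[OF Pc N] unfolding rho_def Pc_def by auto
      hence "s * norm e \<le> rho P" using s by (simp add: norm_mult)
      hence "s * norm e < s * 1" using s by linarith
      thus "a < 1" using a s by (metis mult_less_cancel_left_pos)
    qed
    thus ?thesis unfolding spectral_radius_def using Max_less_iff[OF fin ne] by auto
  qed
  then obtain c where c: "\<And>k. norm_bound (Q ^\<^sub>m k) c"
    using spectral_radius_jnf_norm_bound_less_1_upper_triangular[OF Q] by auto
  have cb: "\<bar>(R ^\<^sub>m k) $$ (i,j)\<bar> \<le> c" if "i < N" "j < N" for i j k
  proof -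
    have "Q ^\<^sub>m k = map_mat complex_of_real (R ^\<^sub>m k)"
      unfolding Q_def by (rule of_real_hom.mat_hom_pow[OF R, symmetric])
    hence "(Q ^\<^sub>m k) $$ (i,j) = complex_of_real ((R ^\<^sub>m k) $$ (i,j))" using that R by simp
    moreover have "norm ((Q ^\<^sub>m k) $$ (i,j)) \<le> c" using c[of k] that Q
      unfolding norm_bound_def by auto
    ultimately show ?thesis by simp
  qed
  define a where "a = mu / s"
  have a1: "a > 1" using s unfolding a_def by simp
  have Rpow_nn: "\<forall>i<N. \<forall>j<N. (R ^\<^sub>m k) $$ (i,j) \<ge> 0" for k
  proof (induction k)
    case 0 thus ?case using R by auto
  next
    case (Suc k)
    have Rk: "R ^\<^sub>m k \<in> carrier_mat N N" using R by simp
    show ?case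
    proof (intro allI impI)
      fix i j assume ij: "i < N" "j < N"
      have "(R ^\<^sub>m Suc k) $$ (i,j) = (\<Sum>l<N. (R ^\<^sub>m k) $$ (i,l) * R $$ (l,j))"
        using ij Rk R by (simp add: scalar_prod_def lessThan_atLeast0)
      also have "\<dots> \<ge> 0" using Suc Rnn ij by (intro sum_nonneg) auto
      finally show "(R ^\<^sub>m Suc k) $$ (i,j) \<ge> 0" .
    qed
  qed
  have Rineq: "\<forall>i<N. a * x i \<le> (\<Sum>j<N. R $$ (i,j) * x j)"
  proof (intro allI impI)
    fix i assume i: "i < N"
    have "(\<Sum>j<N. R $$ (i,j) * x j) = (1/s) * (\<Sum>j<N. P $$ (i,j) * x j)"
      using i P unfolding R_def by (simp add: sum_distrib_left)
    moreover have "a * x i = (1/s) * (mu * x i)" unfolding a_def by simp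
    ultimately show "a * x i \<le> (\<Sum>j<N. R $$ (i,j) * x j)"
      using ineq i s by (simp add: divide_right_mono)
  qed
  have grow: "\<forall>i<N. a ^ k * x i \<le> (\<Sum>j<N. (R ^\<^sub>m k) $$ (i,j) * x j)" for k
  proof (induction k)
    case 0
    show ?case
    proof (intro allI impI)
      fix i assume i: "i < N"
      have "(\<Sum>j<N. (R ^\<^sub>m 0) $$ (i,j) * x j) = (\<Sum>j<N. if j = i then x i else 0)"
        using i R by (intro sum.cong) auto
      thus "a ^ 0 * x i \<le> (\<Sum>j<N. (R ^\<^sub>m 0) $$ (i,j) * x j)" using i by simp
    qed
  next
    case (Suc k)
    have Rk: "R ^\<^sub>m k \<in> carrier_mat N N" using R by simp
    show ?case
    proof (intro allI impI)
      fix i assume i: "i < N"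
      have e1: "(\<Sum>j<N. (R ^\<^sub>m Suc k) $$ (i,j) * x j)
          = (\<Sum>j<N. (\<Sum>l<N. R $$ (i,l) * (R ^\<^sub>m k) $$ (l,j)) * x j)"
        unfolding pow_mat_Suc_left[OF R] using i R Rk
        by (intro sum.cong) (auto simp: scalar_prod_def lessThan_atLeast0)
      also have "\<dots> = (\<Sum>l<N. R $$ (i,l) * (\<Sum>j<N. (R ^\<^sub>m k) $$ (l,j) * x j))"
        by (simp only: sum_distrib_right sum_distrib_left mult.assoc) (rule sum.swap)
      finally have e1: "(\<Sum>j<N. (R ^\<^sub>m Suc k) $$ (i,j) * x j)
          = (\<Sum>l<N. R $$ (i,l) * (\<Sum>j<N. (R ^\<^sub>m k) $$ (l,j) * x j))" .
      have "a ^ Suc k * x i = a ^ k * (a * x i)" by simp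
      also have "\<dots> \<le> a ^ k * (\<Sum>l<N. R $$ (i,l) * x l)"
        using Rineq i a1 by (intro mult_left_mono) auto
      also have "\<dots> = (\<Sum>l<N. R $$ (i,l) * (a ^ k * x l))"
        by (simp add: sum_distrib_left mult_ac)
      also have "\<dots> \<le> (\<Sum>l<N. R $$ (i,l) * (\<Sum>j<N. (R ^\<^sub>m k) $$ (l,j) * x j))"
        using Suc Rnn i by (intro sum_mono mult_left_mono) auto
      also have "\<dots> = (\<Sum>j<N. (R ^\<^sub>m Suc k) $$ (i,j) * x j)" using e1 by simp
      finally show "a ^ Suc k * x i \<le> (\<Sum>j<N. (R ^\<^sub>m Suc k) $$ (i,j) * x j)" .
    qed
  qed
  define X where "X = (\<Sum>j<N. x j)"
  have bnd: "a ^ k * x i0 \<le> c * X" for k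
  proof -
    have "a ^ k * x i0 \<le> (\<Sum>j<N. (R ^\<^sub>m k) $$ (i0,j) * x j)" using grow ipos by auto
    also have "\<dots> \<le> (\<Sum>j<N. c * x j)"
      using cb ipos xnn Rpow_nn by (intro sum_mono mult_right_mono) auto
    finally show ?thesis unfolding X_def by (simp add: sum_distrib_left)
  qed
  obtain k where "c * X / x i0 < a ^ k" using real_arch_pow[OF a1] by blast
  hence "c * X < a ^ k * x i0" using ipos by (simp add: field_simps)
  thus False using bnd[of k] by simp
qed



lemma eig_embed:
  fixes A :: "real mat" and C :: "complex mat"
  assumes A: "A \<in> carrier_mat N N" and C: "C \<in> carrier_mat m m"
    and inj: "inj_on p {..<m}" and pN: "\<forall>i<m. p i < N"
    and Ce: "\<forall>i<m. \<forall>j<m. C $$ (i,j) = complex_of_real (A $$ (p i, p j))"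
    and e: "e \<in> spectrum C"
  shows "norm e \<le> rho (abs_mat A)"
proof -
  from e obtain v where v: "v \<in> carrier_vec m" "v \<noteq> 0\<^sub>v m" "C *\<^sub>v v = e \<cdot>\<^sub>v v"
    unfolding spectrum_def eigenvalue_def eigenvector_def using C by auto
  define q where "q = the_inv_into {..<m} p"
  have qp: "q (p k) = k" if "k < m" for k
    unfolding q_def using the_inv_into_f_f[OF inj] that by auto
  define x where "x a = (if a \<in> p ` {..<m} then norm (v $ q a) else 0)" for a
  have xp: "x (p k) = norm (v $ k)" if "k < m" for k using that qp unfolding x_def by auto
  have xnn: "\<forall>i<N. x i \<ge> 0" unfolding x_def by auto
  obtain j where j: "j < m" "v $ j \<noteq> 0"
    using v(1,2) by (metis carrier_vecD eq_vecI index_zero_vec(1,2))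
  have absA: "abs_mat A \<in> carrier_mat N N" using A unfolding abs_mat_def by auto
  have absAe: "abs_mat A $$ (i,k) = \<bar>A $$ (i,k)\<bar>" if "i < N" "k < N" for i k
    using A that unfolding abs_mat_def by auto
  show ?thesis
  proof (rule mat_vec_nonneg_bound[OF absA _ xnn])
    show "\<forall>i<N. \<forall>j<N. 0 \<le> abs_mat A $$ (i, j)" using absAe by auto
    show "p j < N" using pN j by auto
    show "0 < x (p j)" using xp[OF j(1)] j by auto
    show "0 \<le> norm e" by simp
    show "\<forall>i<N. norm e * x i \<le> (\<Sum>b<N. abs_mat A $$ (i, b) * x b)"
    proof (intro allI impI)
      fix i assume i: "i < N"
      have nn: "(\<Sum>b<N. abs_mat A $$ (i, b) * x b) \<ge> 0"
        using absAe i xnn by (intro sum_nonneg) auto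
      show "norm e * x i \<le> (\<Sum>b<N. abs_mat A $$ (i, b) * x b)"
      proof (cases "i \<in> p ` {..<m}")
        case False thus ?thesis using nn unfolding x_def by simp
      next
        case True
        then obtain k where k: "k < m" and ik: "i = p k" by auto
        have "(C *\<^sub>v v) $ k = (\<Sum>l<m. C $$ (k,l) * v $ l)"
          using C v(1) k by (simp add: scalar_prod_def lessThan_atLeast0)
        hence "e * v $ k = (\<Sum>l<m. C $$ (k,l) * v $ l)" using v(3) k v(1) by simp
        hence "norm e * x i = norm (\<Sum>l<m. C $$ (k,l) * v $ l)"
          using xp[OF k] ik by (metis norm_mult)
        also have "\<dots> \<le> (\<Sum>l<m. norm (C $$ (k,l) * v $ l))" by (rule norm_sum)
        also have "\<dots> = (\<Sum>l<m. abs_mat A $$ (i, p l) * x (p l))"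
          using Ce k ik xp absAe pN i by (intro sum.cong) (auto simp: norm_mult)
        also have "\<dots> = (\<Sum>b\<in>p ` {..<m}. abs_mat A $$ (i, b) * x b)"
          by (rule sum.reindex[OF inj, symmetric, unfolded comp_def])
        also have "\<dots> \<le> (\<Sum>b<N. abs_mat A $$ (i, b) * x b)"
          using absAe i xnn pN by (intro sum_mono2) auto
        finally show ?thesis .
      qed
    qed
  qed
qed



lemma rho_nonneg:
  assumes "A \<in> carrier_mat N N" "N > 0"
  shows "rho A \<ge> 0"
  using spectral_radius_mem_max(1)[of "map_mat complex_of_real A" N] assms
  unfolding rho_def by auto

lemma tr_abs_bound:
  assumes A: "A \<in> carrier_mat N N" and N: "N > 0"
  shows "tr (abs_mat A ^\<^sub>m m) \<le> real N * rho (abs_mat A) ^ m"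
proof -
  define P where "P = abs_mat A"
  have P: "P \<in> carrier_mat N N" using A unfolding P_def abs_mat_def by auto
  define Pc where "Pc = map_mat complex_of_real P"
  have Pc: "Pc \<in> carrier_mat N N" using P unfolding Pc_def by auto
  obtain es where len: "length es = N" and ses: "set es \<subseteq> spectrum Pc"
    and trs: "\<And>m. tr (Pc ^\<^sub>m m) = (\<Sum>i<N. (es!i)^m)"
    using eig_decomp[OF Pc] by blast
  have nb: "norm (es!i) \<le> rho P" if "i < N" for i
  proof -
    have "es!i \<in> spectrum Pc" using ses len that by (meson nth_mem subsetD)
    thus ?thesis using spectral_radius_mem_max(2)[OF Pc N] unfolding rho_def Pc_def by auto
  qed
  have "complex_of_real (tr (P ^\<^sub>m m)) = tr (Pc ^\<^sub>m m)"
    unfolding Pc_def of_real_hom.mat_hom_pow[OF P, symmetric]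
    by (rule tr_of_real[symmetric]) (use P in auto)
  hence "tr (P ^\<^sub>m m) \<le> norm (tr (Pc ^\<^sub>m m))" by (metis norm_of_real abs_ge_self)
  also have "\<dots> \<le> (\<Sum>i<N. norm ((es!i)^m))" unfolding trs by (rule norm_sum)
  also have "\<dots> \<le> (\<Sum>i<N. rho P ^ m)"
  proof (intro sum_mono)
    fix i assume "i \<in> {..<N}"
    thus "norm ((es!i)^m) \<le> rho P ^ m" unfolding norm_power using nb by (intro power_mono) auto
  qed
  finally show ?thesis unfolding P_def by simp
qed

lemma log_det_sub:
  assumes A: "A \<in> carrier_mat N N" and r: "rho (abs_mat A) < 1" and B: "B \<subseteq> {0..<N}"
  shows "det_I_minus (principal_submatrix A B) > 0 \<and>
    (\<lambda>m. tr (principal_submatrix A B ^\<^sub>m m) / real m) sums (- ln (det_I_minus (principal_submatrix A B)))"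
proof -
  define S where "S = principal_submatrix A B"
  have cB: "card {i. i < dim_row A \<and> i \<in> B} = card B"
    using A B by (intro arg_cong[of _ _ card]) auto
  have cB': "card {i. i < dim_col A \<and> i \<in> B} = card B"
    using A B by (intro arg_cong[of _ _ card]) auto
  have S: "S \<in> carrier_mat (card B) (card B)"
    unfolding S_def principal_submatrix_def using dim_submatrix[of A B B] cB cB' by auto
  have Se: "S $$ (i,j) = A $$ (pick B i, pick B j)" if "i < card B" "j < card B" for i j
    unfolding S_def principal_submatrix_def using submatrix_index[of i A B j B] cB cB' that by auto
  have finB: "finite B" using finite_subset[OF B] by simp
  have inj: "inj_on (pick B) {..<card B}"
  proof (rule inj_onI)
    fix i j assume i: "i \<in> {..<card B}" and j: "j \<in> {..<card B}" and eq: "pick B i = pick B j"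
    have i': "i < card B" and j': "j < card B" using i j by auto
    show "i = j"
    proof (rule ccontr)
      assume "i \<noteq> j"
      hence "i < j \<or> j < i" by linarith
      thus False
      proof
        assume "i < j" hence "pick B i < pick B j" using pick_mono_le[OF j'] by blast
        thus False using eq by simp
      next
        assume "j < i" hence "pick B j < pick B i" using pick_mono_le[OF i'] by blast
        thus False using eq by simp
      qed
    qed
  qed
  have pN: "\<forall>i<card B. pick B i < N"
  proof (intro allI impI)
    fix i assume "i < card B" hence "pick B i \<in> B" by (rule pick_in_set_le)
    thus "pick B i < N" using B by auto
  qed
  have sp: "\<forall>e\<in>spectrum (map_mat complex_of_real S). norm e < 1"
  proof
    fix e assume e: "e \<in> spectrum (map_mat complex_of_real S)"
    have "norm e \<le> rho (abs_mat A)"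
      by (rule eig_embed[OF A _ inj pN _ e]) (use S Se in auto)
    thus "norm e < 1" using r by simp
  qed
  from log_det[OF S sp] show ?thesis
    unfolding S_def[symmetric] det_I_minus_def using S by simp
qed

lemma log_det_full:
  assumes A: "A \<in> carrier_mat N N" and r: "rho (abs_mat A) < 1"
  shows "det_I_minus A > 0 \<and> (\<lambda>m. tr (A ^\<^sub>m m) / real m) sums (- ln (det_I_minus A))"
proof -
  have sp: "\<forall>e\<in>spectrum (map_mat complex_of_real A). norm e < 1"
  proof
    fix e assume e: "e \<in> spectrum (map_mat complex_of_real A)"
    have "norm e \<le> rho (abs_mat A)"
      by (rule eig_embed[OF A _ inj_on_id[of "{..<N}"] _ _ e]) (use A in auto)
    thus "norm e < 1" using r by simp
  qed
  from log_det[OF A sp] show ?thesis unfolding det_I_minus_def using A by simp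
qed



definition paths :: "nat set \<Rightarrow> nat \<Rightarrow> nat \<Rightarrow> nat \<Rightarrow> nat list set" where
  "paths S m a b = {w. length w = Suc m \<and> set w \<subseteq> S \<and> hd w = a \<and> last w = b}"

definition wt :: "real mat \<Rightarrow> nat list \<Rightarrow> real" where
  "wt A w = (\<Prod>t<length w - 1. A $$ (w ! t, w ! Suc t))"

lemma finite_paths: "finite S \<Longrightarrow> finite (paths S m a b)"
  unfolding paths_def
  by (rule finite_subset[OF _ finite_lists_length_eq[of S "Suc m"]]) auto

lemma wt_snoc: "w \<noteq> [] \<Longrightarrow> wt A (w @ [b]) = wt A w * A $$ (last w, b)"
proof -
  assume w: "w \<noteq> []"
  have "wt A (w @ [b]) = (\<Prod>t<Suc (length w - 1). A $$ ((w @ [b]) ! t, (w @ [b]) ! Suc t))"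
    unfolding wt_def using w by simp
  also have "\<dots> = (\<Prod>t<length w - 1. A $$ ((w @ [b]) ! t, (w @ [b]) ! Suc t)) *
      A $$ ((w @ [b]) ! (length w - 1), (w @ [b]) ! Suc (length w - 1))"
    by (rule prod.lessThan_Suc)
  also have "(\<Prod>t<length w - 1. A $$ ((w @ [b]) ! t, (w @ [b]) ! Suc t)) = wt A w"
    unfolding wt_def by (intro prod.cong) (auto simp: nth_append)
  also have "(w @ [b]) ! (length w - 1) = last w" using w by (simp add: nth_append last_conv_nth)
  also have "(w @ [b]) ! Suc (length w - 1) = b" using w by (simp add: nth_append)
  finally show ?thesis .
qed

lemma paths_0: "a \<in> S \<Longrightarrow> paths S 0 a b = (if a = b then {[a]} else {})"
  unfolding paths_def by (auto simp: length_Suc_conv)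

lemma paths_Suc:
  assumes b: "b \<in> S"
  shows "paths S (Suc m) a b = (\<lambda>w. w @ [b]) ` (\<Union>c\<in>S. paths S m a c)"
proof
  show "paths S (Suc m) a b \<subseteq> (\<lambda>w. w @ [b]) ` (\<Union>c\<in>S. paths S m a c)"
  proof
    fix v assume v: "v \<in> paths S (Suc m) a b"
    hence v1: "length v = Suc (Suc m)" "set v \<subseteq> S" "hd v = a" "last v = b"
      unfolding paths_def by auto
    have ne: "v \<noteq> []" using v1 by auto
    have eq: "v = butlast v @ [b]" using append_butlast_last_id[OF ne] v1(4) by simp
    have bl: "butlast v \<noteq> []" using v1 by (metis eq append_Nil length_Cons length_Suc_conv list.size(3) nat.inject nat.simps(3))
    have "butlast v \<in> paths S m a (last (butlast v))"
      unfolding paths_def using v1 bl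
      by (auto simp: hd_append2[symmetric] dest: in_set_butlastD)
         (metis append_butlast_last_id hd_append2 ne)
    moreover have "last (butlast v) \<in> S" using bl v1 by (meson in_set_butlastD last_in_set subsetD)
    ultimately show "v \<in> (\<lambda>w. w @ [b]) ` (\<Union>c\<in>S. paths S m a c)" using eq by blast
  qed
next
  show "(\<lambda>w. w @ [b]) ` (\<Union>c\<in>S. paths S m a c) \<subseteq> paths S (Suc m) a b"
    unfolding paths_def using b by (auto simp: hd_append)
qed

lemma sum_paths_Suc:
  assumes fin: "finite S" and b: "b \<in> S"
  shows "(\<Sum>w\<in>paths S (Suc m) a b. wt A w) = (\<Sum>c\<in>S. (\<Sum>w\<in>paths S m a c. wt A w) * A $$ (c, b))"
proof -
  have inj: "inj_on (\<lambda>w. w @ [b]) (\<Union>c\<in>S. paths S m a c)" by (rule inj_onI) simp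
  have "(\<Sum>w\<in>paths S (Suc m) a b. wt A w) = (\<Sum>w\<in>(\<Union>c\<in>S. paths S m a c). wt A (w @ [b]))"
    unfolding paths_Suc[OF b] by (subst sum.reindex[OF inj]) simp
  also have "\<dots> = (\<Sum>c\<in>S. \<Sum>w\<in>paths S m a c. wt A (w @ [b]))"
    by (intro sum.UNION_disjoint) (simp_all add: fin finite_paths, auto simp: paths_def)
  also have "\<dots> = (\<Sum>c\<in>S. (\<Sum>w\<in>paths S m a c. wt A w) * A $$ (c, b))"
    unfolding sum_distrib_right
    by (intro sum.cong refl) (clarsimp simp: paths_def, rule wt_snoc, auto)
  finally show ?thesis .
qed

lemma pow_paths:
  fixes A :: "real mat" and M :: "real mat"
  assumes M: "M \<in> carrier_mat k k" and inj: "inj_on p {..<k}"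
    and Me: "\<forall>i<k. \<forall>j<k. M $$ (i,j) = A $$ (p i, p j)"
  shows "\<forall>i<k. \<forall>j<k. (M ^\<^sub>m m) $$ (i,j) = (\<Sum>w\<in>paths (p ` {..<k}) m (p i) (p j). wt A w)"
proof (induction m)
  case 0
  show ?case
  proof (intro allI impI)
    fix i j assume ij: "i < k" "j < k"
    have "paths (p ` {..<k}) 0 (p i) (p j) = (if p i = p j then {[p i]} else {})"
      using ij by (intro paths_0) auto
    moreover have "(p i = p j) = (i = j)" using inj ij by (auto dest: inj_onD)
    ultimately show "(M ^\<^sub>m 0) $$ (i,j) = (\<Sum>w\<in>paths (p ` {..<k}) 0 (p i) (p j). wt A w)"
      using ij M by (auto simp: wt_def)
  qed
next
  case (Suc m)
  show ?case
  proof (intro allI impI)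
    fix i j assume ij: "i < k" "j < k"
    have Mm: "M ^\<^sub>m m \<in> carrier_mat k k" using M by simp
    have "(M ^\<^sub>m Suc m) $$ (i,j) = (\<Sum>l<k. (M ^\<^sub>m m) $$ (i,l) * M $$ (l,j))"
      using ij M Mm by (simp add: scalar_prod_def lessThan_atLeast0)
    also have "\<dots> = (\<Sum>l<k. (\<Sum>w\<in>paths (p ` {..<k}) m (p i) (p l). wt A w) * A $$ (p l, p j))"
      using Suc ij Me by (intro sum.cong) auto
    also have "\<dots> = (\<Sum>c\<in>p ` {..<k}. (\<Sum>w\<in>paths (p ` {..<k}) m (p i) c. wt A w) * A $$ (c, p j))"
      by (rule sum.reindex[OF inj, symmetric, unfolded comp_def])
    also have "\<dots> = (\<Sum>w\<in>paths (p ` {..<k}) (Suc m) (p i) (p j). wt A w)"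
      by (rule sum_paths_Suc[symmetric]) (use ij in auto)
    finally show "(M ^\<^sub>m Suc m) $$ (i,j) = (\<Sum>w\<in>paths (p ` {..<k}) (Suc m) (p i) (p j). wt A w)" .
  qed
qed

definition cw :: "nat set \<Rightarrow> nat \<Rightarrow> nat list set" where
  "cw S m = {w. length w = Suc m \<and> set w \<subseteq> S \<and> hd w = last w}"

lemma finite_cw: "finite S \<Longrightarrow> finite (cw S m)"
  unfolding cw_def
  by (rule finite_subset[OF _ finite_lists_length_eq[of S "Suc m"]]) auto

lemma tr_paths:
  fixes A :: "real mat" and M :: "real mat"
  assumes M: "M \<in> carrier_mat k k" and inj: "inj_on p {..<k}"
    and Me: "\<forall>i<k. \<forall>j<k. M $$ (i,j) = A $$ (p i, p j)"
  shows "tr (M ^\<^sub>m m) = (\<Sum>w\<in>cw (p ` {..<k}) m. wt A w)"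
proof -
  let ?S = "p ` {..<k}"
  have "tr (M ^\<^sub>m m) = (\<Sum>i<k. \<Sum>w\<in>paths ?S m (p i) (p i). wt A w)"
    unfolding tr_def using pow_paths[OF M inj Me, of m] M by simp
  also have "\<dots> = (\<Sum>a\<in>?S. \<Sum>w\<in>paths ?S m a a. wt A w)"
    by (rule sum.reindex[OF inj, symmetric, unfolded comp_def])
  also have "\<dots> = (\<Sum>w\<in>(\<Union>a\<in>?S. paths ?S m a a). wt A w)"
    by (intro sum.UNION_disjoint[symmetric]) (simp_all add: finite_paths, auto simp: paths_def)
  also have "(\<Union>a\<in>?S. paths ?S m a a) = cw ?S m"
  proof
    show "(\<Union>a\<in>?S. paths ?S m a a) \<subseteq> cw ?S m" unfolding paths_def cw_def by auto
    show "cw ?S m \<subseteq> (\<Union>a\<in>?S. paths ?S m a a)"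
    proof
      fix w assume w: "w \<in> cw ?S m"
      hence "w \<noteq> []" "set w \<subseteq> ?S" unfolding cw_def by auto
      hence "hd w \<in> ?S" by (meson hd_in_set subsetD)
      thus "w \<in> (\<Union>a\<in>?S. paths ?S m a a)" using w unfolding cw_def paths_def by auto
    qed
  qed
  finally show ?thesis .
qed



declare block_weight.simps[simp del]

lemma concat_rep_add: "concat (replicate a x) @ concat (replicate b x) = concat (replicate (a + b) x)"
  by (simp add: replicate_add)

lemma concat_rep_rep: "concat (replicate b (concat (replicate j x))) = concat (replicate (b * j) x)"
  by (induction b) (simp_all add: concat_rep_add)

lemma walk_power_1: "walk_power c 1 = c"
  unfolding walk_power_def by simp

lemma tl_walk_power: "c \<noteq> [] \<Longrightarrow> k \<ge> 1 \<Longrightarrow> tl (walk_power c k) = concat (replicate k (tl c))"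
  unfolding walk_power_def by (cases k) auto

lemma walk_power_mult:
  assumes d: "d \<noteq> []" and j: "j \<ge> 1" and k: "k \<ge> 1"
  shows "walk_power (walk_power d j) k = walk_power d (j * k)"
proof -
  have "walk_power (walk_power d j) k = walk_power d j @ concat (replicate (k - 1) (concat (replicate j (tl d))))"
    unfolding walk_power_def[of "walk_power d j" k] tl_walk_power[OF d j] ..
  also have "\<dots> = d @ concat (replicate (j - 1) (tl d)) @ concat (replicate ((k - 1) * j) (tl d))"
    unfolding walk_power_def concat_rep_rep by simp
  also have "\<dots> = d @ concat (replicate (j - 1 + (k - 1) * j) (tl d))"
    by (simp add: concat_rep_add)
  also have "j - 1 + (k - 1) * j = j * k - 1" using j k
    by (cases j; cases k) (auto simp: algebra_simps)
  finally show ?thesis unfolding walk_power_def .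
qed

lemma set_walk_power: "set (walk_power c k) \<subseteq> set c"
  unfolding walk_power_def by (auto dest: list.set_sel(2)[rotated] simp: set_concat)
    (metis empty_iff list.set(1) list.set_sel(2) tl_Nil)

lemma length_walk_power: "length (walk_power c k) \<ge> length c"
  unfolding walk_power_def by simp

lemma length_cyclic_shift: "w \<noteq> [] \<Longrightarrow> length (cyclic_shift w) = length w"
  unfolding cyclic_shift_def by simp

lemma length_shift_pow: "w \<noteq> [] \<Longrightarrow> length ((cyclic_shift ^^ k) w) = length w"
proof (induction k)
  case 0 thus ?case by simp
next
  case (Suc k)
  hence "(cyclic_shift ^^ k) w \<noteq> []" by auto
  thus ?case using Suc by (simp add: length_cyclic_shift)
qed

lemma orbit_length_of: "w \<noteq> [] \<Longrightarrow> orbit_length (orbit_of w) = walk_length w"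
proof -
  assume w: "w \<noteq> []"
  have "w \<in> orbit_of w" unfolding orbit_of_def by (auto intro: exI[of _ 0])
  hence "(SOME v. v \<in> orbit_of w) \<in> orbit_of w" by (rule someI)
  then obtain k where "(SOME v. v \<in> orbit_of w) = (cyclic_shift ^^ k) w" unfolding orbit_of_def by auto
  thus ?thesis unfolding orbit_length_def walk_length_def using length_shift_pow[OF w] by simp
qed

lemma closed_walk_ne: "closed_walk A c \<Longrightarrow> c \<noteq> []"
  unfolding closed_walk_def by auto

lemma covered_walk:
  assumes cover: "\<forall>l\<in>orbits A. orbit_length l < L \<longrightarrow> (\<exists>B\<in>\<B>. covered_by l B)"
    and w: "closed_walk A w" and wl: "walk_length w < L"
  shows "\<exists>B\<in>\<B>. set w \<subseteq> B"
proof -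
  define P where "P c = (closed_walk A c \<and> (\<exists>k\<ge>1. w = walk_power c k))" for c
  have "P w" unfolding P_def using w walk_power_1 by (metis order_refl)
  then obtain c where Pc: "P c" and minc: "\<And>d. P d \<Longrightarrow> walk_length c \<le> walk_length d"
    using ex_has_least_nat[of P w walk_length] by blast
  from Pc obtain k where cc: "closed_walk A c" and k: "k \<ge> 1" and wc: "w = walk_power c k"
    unfolding P_def by auto
  have prim: "primitive_closed_walk A c"
    unfolding primitive_closed_walk_def
  proof (intro conjI cc notI)
    assume "\<exists>d j. j \<ge> 2 \<and> closed_walk A d \<and> walk_length d < walk_length c \<and> c = walk_power d j"
    then obtain d j where j: "j \<ge> 2" and dc: "closed_walk A d" and dl: "walk_length d < walk_length c"
      and cd: "c = walk_power d j" by blast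
    have "w = walk_power d (j * k)" unfolding wc cd
      by (rule walk_power_mult) (use closed_walk_ne[OF dc] j k in auto)
    moreover have "j * k \<ge> 1" using j k by simp
    ultimately have "P d" unfolding P_def using dc by blast
    from minc[OF this] dl show False by simp
  qed
  hence orb: "orbit_of c \<in> orbits A" unfolding orbits_def by blast
  have "orbit_length (orbit_of c) = walk_length c" by (rule orbit_length_of[OF closed_walk_ne[OF cc]])
  also have "walk_length c \<le> walk_length w" unfolding wc walk_length_def
    using length_walk_power[of c k] by simp
  finally have "orbit_length (orbit_of c) < L" using wl by simp
  then obtain B where B: "B \<in> \<B>" and cov: "covered_by (orbit_of c) B" using cover orb by blast
  have "c \<in> orbit_of c" unfolding orbit_of_def by (auto intro: exI[of _ 0])
  hence "set c \<subseteq> B" using cov unfolding covered_by_def by auto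
  hence "set w \<subseteq> B" unfolding wc using set_walk_power by blast
  thus ?thesis using B by blast
qed

lemma Inter_closed:
  assumes cl: "\<forall>B\<in>\<B>. \<forall>B'\<in>\<B>. B \<inter> B' \<in> \<B>"
  shows "finite G \<Longrightarrow> G \<noteq> {} \<Longrightarrow> G \<subseteq> \<B> \<Longrightarrow> \<Inter>G \<in> \<B>"
proof (induction G rule: finite_ne_induct)
  case (singleton x) thus ?case by simp
next
  case (insert x F)
  thus ?case using cl by auto
qed

lemma block_weight_eq:
  assumes "finite \<B>" "\<forall>B'\<in>\<B>. finite B'"
  shows "block_weight \<B> B = 1 - (\<Sum>B'\<in>{B'\<in>\<B>. B \<subset> B'}. block_weight \<B> B')"
  by (subst block_weight.simps) (use assms in simp)

lemma moebius:
  assumes fin: "finite \<B>" and finB: "\<forall>B'\<in>\<B>. finite B'"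
    and cl: "\<forall>B\<in>\<B>. \<forall>B'\<in>\<B>. B \<inter> B' \<in> \<B>"
    and B1: "B1 \<in> \<B>" "S \<subseteq> B1"
  shows "(\<Sum>B\<in>{B\<in>\<B>. S \<subseteq> B}. block_weight \<B> B) = 1"
proof -
  define F where "F = {B\<in>\<B>. S \<subseteq> B}"
  define B0 where "B0 = \<Inter>F"
  have Ffin: "finite F" "F \<noteq> {}" "F \<subseteq> \<B>" using fin B1 unfolding F_def by auto
  have B0: "B0 \<in> \<B>" unfolding B0_def by (rule Inter_closed[OF cl Ffin])
  have SB0: "S \<subseteq> B0" unfolding B0_def F_def by auto
  have "F = {B\<in>\<B>. B0 \<subseteq> B}"
  proof
    show "F \<subseteq> {B\<in>\<B>. B0 \<subseteq> B}" unfolding B0_def F_def by auto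
    show "{B\<in>\<B>. B0 \<subseteq> B} \<subseteq> F" using SB0 unfolding F_def by auto
  qed
  also have "\<dots> = insert B0 {B\<in>\<B>. B0 \<subset> B}" using B0 by auto
  finally have FB: "F = insert B0 {B\<in>\<B>. B0 \<subset> B}" .
  have "(\<Sum>B\<in>F. block_weight \<B> B) = block_weight \<B> B0 + (\<Sum>B\<in>{B\<in>\<B>. B0 \<subset> B}. block_weight \<B> B)"
    unfolding FB by (rule sum.insert) (use fin in auto)
  also have "\<dots> = 1" unfolding block_weight_eq[OF fin finB, of B0] by simp
  finally show ?thesis unfolding F_def .
qed



lemma sub_facts:
  assumes A: "A \<in> carrier_mat N N" and B: "B \<subseteq> {0..<N}"
  shows "principal_submatrix A B \<in> carrier_mat (card B) (card B)"
    "\<forall>i<card B. \<forall>j<card B. principal_submatrix A B $$ (i,j) = A $$ (pick B i, pick B j)"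
    "inj_on (pick B) {..<card B}"
    "pick B ` {..<card B} = B"
proof -
  have cB: "card {i. i < dim_row A \<and> i \<in> B} = card B"
    using A B by (intro arg_cong[of _ _ card]) auto
  have cB': "card {i. i < dim_col A \<and> i \<in> B} = card B"
    using A B by (intro arg_cong[of _ _ card]) auto
  show "principal_submatrix A B \<in> carrier_mat (card B) (card B)"
    unfolding principal_submatrix_def using dim_submatrix[of A B B] cB cB' by auto
  show "\<forall>i<card B. \<forall>j<card B. principal_submatrix A B $$ (i,j) = A $$ (pick B i, pick B j)"
    unfolding principal_submatrix_def using submatrix_index[of _ A B _ B] cB cB' by auto
  show "inj_on (pick B) {..<card B}"
  proof (rule inj_onI)
    fix i j assume i: "i \<in> {..<card B}" and j: "j \<in> {..<card B}" and eq: "pick B i = pick B j"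
    have i': "i < card B" and j': "j < card B" using i j by auto
    show "i = j"
    proof (rule ccontr)
      assume "i \<noteq> j"
      hence "i < j \<or> j < i" by linarith
      thus False
      proof
        assume "i < j" hence "pick B i < pick B j" using pick_mono_le[OF j'] by blast
        thus False using eq by simp
      next
        assume "j < i" hence "pick B j < pick B i" using pick_mono_le[OF i'] by blast
        thus False using eq by simp
      qed
    qed
  qed
  have finB: "finite B" using finite_subset[OF B] by simp
  show "pick B ` {..<card B} = B"
  proof
    show "pick B ` {..<card B} \<subseteq> B"
    proof
      fix b assume "b \<in> pick B ` {..<card B}"
      then obtain i where "i < card B" "b = pick B i" by auto
      thus "b \<in> B" using pick_in_set_le by simp
    qed
    show "B \<subseteq> pick B ` {..<card B}"
    proof
      fix b assume b: "b \<in> B"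
      have "{a\<in>B. a < b} \<subset> B" using b by auto
      hence "card {a\<in>B. a < b} < card B" using finB by (rule psubset_card_mono[rotated])
      moreover have "pick B (card {a\<in>B. a < b}) = b" using b by (rule pick_card_in_set)
      ultimately show "b \<in> pick B ` {..<card B}"
        by (intro image_eqI[where x="card {a\<in>B. a < b}"]) auto
    qed
  qed
qed

lemma tr_full_walks:
  assumes A: "A \<in> carrier_mat N N"
  shows "tr (A ^\<^sub>m m) = (\<Sum>w\<in>cw {0..<N} m. wt A w)"
  using tr_paths[OF A inj_on_id[of "{..<N}"], of A m] by (simp add: lessThan_atLeast0)

lemma tr_sub_walks:
  assumes A: "A \<in> carrier_mat N N" and B: "B \<subseteq> {0..<N}"
  shows "tr (principal_submatrix A B ^\<^sub>m m) = (\<Sum>w\<in>cw B m. wt A w)"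
  using tr_paths[OF sub_facts(1,3,2)[OF A B], of m] sub_facts(4)[OF A B] by simp

lemma tr_abs_walks:
  assumes A: "A \<in> carrier_mat N N"
  shows "tr (abs_mat A ^\<^sub>m m) = (\<Sum>w\<in>cw {0..<N} m. \<bar>wt A w\<bar>)"
proof -
  have aA: "abs_mat A \<in> carrier_mat N N" using A unfolding abs_mat_def by auto
  have "tr (abs_mat A ^\<^sub>m m) = (\<Sum>w\<in>cw {0..<N} m. wt (abs_mat A) w)"
    by (rule tr_full_walks[OF aA])
  also have "\<dots> = (\<Sum>w\<in>cw {0..<N} m. \<bar>wt A w\<bar>)"
  proof (rule sum.cong[OF refl])
    fix w assume w: "w \<in> cw {0..<N} m"
    have "\<forall>t<length w - 1. abs_mat A $$ (w ! t, w ! Suc t) = \<bar>A $$ (w ! t, w ! Suc t)\<bar>"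
    proof (intro allI impI)
      fix t assume t: "t < length w - 1"
      have "w ! t \<in> set w" "w ! Suc t \<in> set w" using t by auto
      hence "w ! t < N" "w ! Suc t < N" using w unfolding cw_def by auto
      thus "abs_mat A $$ (w ! t, w ! Suc t) = \<bar>A $$ (w ! t, w ! Suc t)\<bar>"
        using A unfolding abs_mat_def by auto
    qed
    thus "wt (abs_mat A) w = \<bar>wt A w\<bar>" unfolding wt_def by (simp add: abs_prod)
  qed
  finally show ?thesis .
qed

lemma cw_sub: "B \<subseteq> U \<Longrightarrow> cw B m = {w \<in> cw U m. set w \<subseteq> B}"
  unfolding cw_def by auto

lemma wt_closed_walk:
  assumes A: "A \<in> carrier_mat N N" and w: "w \<in> cw {0..<N} m" and m: "m \<ge> 1" and nz: "wt A w \<noteq> 0"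
  shows "closed_walk A w" "walk_length w = m"
proof -
  have w1: "length w = Suc m" "set w \<subseteq> {0..<N}" "hd w = last w" using w unfolding cw_def by auto
  have "\<forall>t<length w - 1. A $$ (w ! t, w ! Suc t) \<noteq> 0"
    using nz unfolding wt_def by (simp add: prod_zero_iff)
  hence "\<forall>t. Suc t < length w \<longrightarrow> A $$ (w ! t, w ! Suc t) \<noteq> 0" by auto
  moreover have "\<forall>x\<in>set w. x < dim_row A" using w1 A by auto
  ultimately show "closed_walk A w" unfolding closed_walk_def walk_def using w1 m by auto
  show "walk_length w = m" unfolding walk_length_def using w1 by simp
qed

theorem corollary2:
  fixes A :: "real mat" and N L :: nat and \<B> :: "nat set set"
  assumes "A \<in> carrier_mat N N" and "N > 0"
    and "rho (abs_mat A) < 1"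
    and "L \<ge> 1"
    and "finite \<B>" and "\<forall>B\<in>\<B>. B \<subseteq> {0..<N}"
    and "\<forall>l\<in>orbits A. orbit_length l < L \<longrightarrow> (\<exists>B\<in>\<B>. covered_by l B)"
    and "\<forall>B\<in>\<B>. \<forall>B'\<in>\<B>. B \<inter> B' \<in> \<B>"
  shows "(1 / real N) * \<bar>ln (Z_blocks A \<B> / Z_full A)\<bar>
           \<le> rho (abs_mat A) ^ L / (real L * (1 - rho (abs_mat A)))"
proof -
  note A = assms(1) and N = assms(2) and r1 = assms(3) and L = assms(4) and fin = assms(5)
    and sub = assms(6) and cover = assms(7) and cl = assms(8)
  define r where "r = rho (abs_mat A)"
  have aA: "abs_mat A \<in> carrier_mat N N" using A unfolding abs_mat_def by auto
  have r0: "r \<ge> 0" unfolding r_def by (rule rho_nonneg[OF aA N])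
  have r1': "r < 1" using r1 unfolding r_def .
  have finB: "\<forall>B'\<in>\<B>. finite B'"
  proof
    fix B' assume "B' \<in> \<B>" hence "B' \<subseteq> {0..<N}" using sub by blast
    thus "finite B'" by (rule finite_subset) simp
  qed
  define U where "U = {0..<N::nat}"
  define bw where "bw B = block_weight \<B> B" for B
  define c where "c S = (\<Sum>B\<in>{B\<in>\<B>. S \<subseteq> B}. bw B)" for S
  define dB where "dB B = det_I_minus (principal_submatrix A B)" for B
  define dA where "dA = det_I_minus A"
  define trB where "trB B m = tr (principal_submatrix A B ^\<^sub>m m)" for B m
  define trA where "trA m = tr (A ^\<^sub>m m)" for m
  have dBpos: "dB B > 0" and sB: "(\<lambda>m. trB B m / real m) sums (- ln (dB B))" if "B \<in> \<B>" for B
    using log_det_sub[OF A r1 sub[rule_format, OF that]] unfolding dB_def trB_def by auto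
  have dApos: "dA > 0" and sA: "(\<lambda>m. trA m / real m) sums (- ln dA)"
    using log_det_full[OF A r1] unfolding dA_def trA_def by auto
  define Stot where "Stot = (\<Sum>B\<in>\<B>. bw B * (- ln (dB B))) - (- ln dA)"
  have lnZ: "ln (Z_blocks A \<B> / Z_full A) = Stot"
  proof -
    have pos: "inverse (dB B) powr bw B > 0" if "B \<in> \<B>" for B
      using dBpos[OF that] by simp
    have "ln (Z_blocks A \<B>) = (\<Sum>B\<in>\<B>. ln (inverse (dB B) powr bw B))"
      unfolding Z_blocks_def dB_def[symmetric] bw_def[symmetric]
      by (rule ln_prod[OF fin]) (use pos in force)
    also have "\<dots> = (\<Sum>B\<in>\<B>. bw B * (- ln (dB B)))" by (simp add: ln_inverse)
    finally have l1: "ln (Z_blocks A \<B>) = (\<Sum>B\<in>\<B>. bw B * (- ln (dB B)))" .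
    have zb: "Z_blocks A \<B> \<noteq> 0" unfolding Z_blocks_def dB_def[symmetric] bw_def[symmetric]
      using pos fin by (simp add: prod_pos less_imp_neq[symmetric])
    have za: "Z_full A \<noteq> 0" unfolding Z_full_def using dApos dA_def by simp
    have "ln (Z_blocks A \<B> / Z_full A) = ln (Z_blocks A \<B>) - ln (Z_full A)"
      using zb za by (simp add: ln_div)
    also have "ln (Z_full A) = - ln dA" unfolding Z_full_def dA_def by (simp add: ln_inverse)
    finally show ?thesis unfolding Stot_def l1 .
  qed
  define g where "g m = (\<Sum>B\<in>\<B>. bw B * (trB B m / real m)) - trA m / real m" for m
  have "(\<lambda>m. \<Sum>B\<in>\<B>. bw B * (trB B m / real m)) sums (\<Sum>B\<in>\<B>. bw B * (- ln (dB B)))"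
    by (rule sums_sum, rule sums_mult, erule sB)
  hence gs: "g sums Stot"
    unfolding g_def Stot_def by (rule sums_diff[OF _ sA])
  have trA_w: "trA m = (\<Sum>w\<in>cw U m. wt A w)" for m
    unfolding trA_def U_def by (rule tr_full_walks[OF A])
  have trB_w: "trB B m = (\<Sum>w\<in>cw B m. wt A w)" if "B \<in> \<B>" for B m
    unfolding trB_def by (rule tr_sub_walks[OF A sub[rule_format, OF that]])
  have finU: "finite (cw U m)" for m unfolding U_def by (rule finite_cw) simp
  have mix: "(\<Sum>B\<in>\<B>. bw B * trB B m) = (\<Sum>w\<in>cw U m. wt A w * c (set w))" for m
  proof -
    have "(\<Sum>B\<in>\<B>. bw B * trB B m) = (\<Sum>B\<in>\<B>. \<Sum>w\<in>cw U m. if set w \<subseteq> B then bw B * wt A w else 0)"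
    proof (rule sum.cong[OF refl])
      fix B assume B: "B \<in> \<B>"
      have "bw B * trB B m = (\<Sum>w\<in>{w \<in> cw U m. set w \<subseteq> B}. bw B * wt A w)"
        unfolding trB_w[OF B] cw_sub[OF sub[rule_format, OF B, folded U_def]] sum_distrib_left ..
      also have "\<dots> = (\<Sum>w\<in>cw U m. if set w \<subseteq> B then bw B * wt A w else 0)"
        by (rule sum.inter_filter[OF finU])
      finally show "bw B * trB B m = (\<Sum>w\<in>cw U m. if set w \<subseteq> B then bw B * wt A w else 0)" .
    qed
    also have "\<dots> = (\<Sum>w\<in>cw U m. \<Sum>B\<in>\<B>. if set w \<subseteq> B then bw B * wt A w else 0)"
      by (rule sum.swap)
    also have "\<dots> = (\<Sum>w\<in>cw U m. wt A w * c (set w))"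
    proof (rule sum.cong[OF refl])
      fix w
      have "(\<Sum>B\<in>\<B>. if set w \<subseteq> B then bw B * wt A w else 0)
          = (\<Sum>B\<in>\<B>. wt A w * (if set w \<subseteq> B then bw B else 0))"
        by (intro sum.cong) auto
      also have "\<dots> = wt A w * c (set w)"
        unfolding c_def sum_distrib_left[symmetric] sum.inter_filter[OF fin] ..
      finally show "(\<Sum>B\<in>\<B>. if set w \<subseteq> B then bw B * wt A w else 0) = wt A w * c (set w)" .
    qed
    finally show ?thesis .
  qed
  have gdiff: "g m = (\<Sum>w\<in>cw U m. wt A w * (c (set w) - 1)) / real m" for m
  proof -
    have "g m = ((\<Sum>B\<in>\<B>. bw B * trB B m) - trA m) / real m"
      unfolding g_def by (simp add: sum_divide_distrib diff_divide_distrib)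
    also have "(\<Sum>B\<in>\<B>. bw B * trB B m) - trA m = (\<Sum>w\<in>cw U m. wt A w * (c (set w) - 1))"
      unfolding mix trA_w by (simp add: algebra_simps sum_subtractf)
    finally show ?thesis .
  qed
  have c01: "c S = 1 \<or> c S = 0" for S
  proof (cases "\<exists>B\<in>\<B>. S \<subseteq> B")
    case True
    then obtain B1 where "B1 \<in> \<B>" "S \<subseteq> B1" by blast
    thus ?thesis using moebius[OF fin finB cl] unfolding c_def bw_def by blast
  next
    case False
    hence e: "{B\<in>\<B>. S \<subseteq> B} = {}" by auto
    show ?thesis unfolding c_def e by simp
  qed
  have g0: "g m = 0" if "m < L" for m
  proof (cases "m = 0")
    case True thus ?thesis using gdiff by simp
  next
    case False
    have "wt A w * (c (set w) - 1) = 0" if w: "w \<in> cw U m" for w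
    proof (cases "wt A w = 0")
      case False
      have cwk: "closed_walk A w" "walk_length w = m"
        using wt_closed_walk[OF A w[unfolded U_def] _ False] \<open>m \<noteq> 0\<close> by auto
      obtain B where "B \<in> \<B>" "set w \<subseteq> B"
        using covered_walk[OF cover cwk(1)] cwk(2) \<open>m < L\<close> by auto
      hence "c (set w) = 1" using moebius[OF fin finB cl] unfolding c_def bw_def by blast
      thus ?thesis by simp
    qed simp
    thus ?thesis unfolding gdiff by simp
  qed
  define h where "h m = (if L \<le> m then real N * r ^ m / real L else 0)" for m
  have gh: "\<bar>g m\<bar> \<le> h m" for m
  proof (cases "L \<le> m")
    case False thus ?thesis using g0 unfolding h_def by simp
  next
    case True
    have m: "real m \<ge> real L" "real L \<ge> 1" using True L by auto
    have "\<bar>\<Sum>w\<in>cw U m. wt A w * (c (set w) - 1)\<bar> \<le> (\<Sum>w\<in>cw U m. \<bar>wt A w * (c (set w) - 1)\<bar>)"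
      by (rule sum_abs)
    also have "\<dots> \<le> (\<Sum>w\<in>cw U m. \<bar>wt A w\<bar>)"
    proof (rule sum_mono)
      fix w
      have "\<bar>c (set w) - 1\<bar> \<le> 1" using c01[of "set w"] by auto
      thus "\<bar>wt A w * (c (set w) - 1)\<bar> \<le> \<bar>wt A w\<bar>"
        by (simp add: abs_mult mult_left_le)
    qed
    also have "\<dots> = tr (abs_mat A ^\<^sub>m m)" unfolding U_def by (rule tr_abs_walks[OF A, symmetric])
    also have "\<dots> \<le> real N * r ^ m" unfolding r_def by (rule tr_abs_bound[OF A N])
    finally have d: "\<bar>\<Sum>w\<in>cw U m. wt A w * (c (set w) - 1)\<bar> \<le> real N * r ^ m" .
    have nn: "real N * r ^ m \<ge> 0" using r0 by simp
    have "\<bar>g m\<bar> = \<bar>\<Sum>w\<in>cw U m. wt A w * (c (set w) - 1)\<bar> / real m"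
      unfolding gdiff by simp
    also have "\<dots> \<le> real N * r ^ m / real m" using d m by (intro divide_right_mono) auto
    also have "\<dots> \<le> real N * r ^ m / real L" using nn m by (intro divide_left_mono) auto
    finally show ?thesis unfolding h_def using True by simp
  qed
  define H where "H = real N * r ^ L / real L * (1 / (1 - r))"
  have hs: "h sums H"
  proof -
    have "(\<lambda>m. real N * r ^ L / real L * r ^ m) sums H"
      unfolding H_def by (intro sums_mult geometric_sums) (use r0 r1' in simp)
    moreover have "(\<lambda>m. h (m + L)) = (\<lambda>m. real N * r ^ L / real L * r ^ m)"
      unfolding h_def by (auto simp: power_add)
    ultimately have "(\<lambda>m. h (m + L)) sums H" by simp
    hence "h sums (H + (\<Sum>i<L. h i))" by (simp add: sums_iff_shift)
    moreover have "(\<Sum>i<L. h i) = 0" unfolding h_def by simp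
    ultimately show ?thesis by simp
  qed
  have gh1: "g m \<le> h m" and gh2: "- h m \<le> g m" for m using gh[of m] by (simp_all add: abs_le_iff)
  have "Stot \<le> H" by (rule sums_le[OF gh1 gs hs])
  moreover have "- H \<le> Stot"
    by (rule sums_le[OF gh2 sums_minus[OF hs] gs])
  ultimately have "\<bar>Stot\<bar> \<le> H" by simp
  hence "(1 / real N) * \<bar>Stot\<bar> \<le> (1 / real N) * H" using N by (intro mult_left_mono) auto
  also have "(1 / real N) * H = r ^ L / (real L * (1 - r))"
    unfolding H_def using N by (simp add: field_simps)
  finally show ?thesis unfolding lnZ r_def .
qed


end
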